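(* Let $n\ge 10^4$ be a multiple of $3$, let $\alpha(n)=e^{120(\log n)^{1/2}}$, $L=n^{1/2}$ and $K=n^{1/2}/12$, and fix integers $i,j\in[-(\log n)^{1/2}/2,(\log n)^{1/2}/2]$. For $D\subset[n]$ let $r_D=|D\cap[n/3]|-n/6$ and $s_D=|D\cap[n/3+1,n]|-n/3$, and let \[ [n]_{i,j}=\{D\subset[n]: |r_D-2iL|\le L\text{ and }|s_D-2jL|\le L\}. \] Choose independently: a uniformly random set $U\subset[n/3]$ of size $K$; a random set $S_1\subset[n/3]\setminus U$ containing each element independently with probability $p_{1,i}=1/2+6i/n^{1/2}$; a uniformly random set $V\subset[n/3+1,n]$ of size $2K$; a random set $S_2\subset[n/3+1,n]\setminus V$ containing each element independently with probability $p_{2,j}=1/2+3j/n^{1/2}$; a uniformly random ordering $(u_1,\ldots,u_K)$ of $U$ and a uniformly random ordering $(v_1,\ldots,v_{2K})$ of $V$. For $k\in[0,K]$ let $U_k=\{u_1,\ldots,u_k\}$, $V_k=\{v_{2K-2k+1},\ldots,v_{2K}\}$ and $C_k=U_k\cup S_1\cup V_k\cup S_2$. Then for every $B\in[n]_{i,j}$ and every $k\in[0,K]$, \[ \mathbb{P}(C_k=B)\ge\frac{1}{8\,\alpha(n)\,|[n]_{i,j}|}. \]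
   Context: $[n]=\{1,\ldots,n\}$ and $[a,b]=\{a,\ldots,b\}$; $\log$ is the natural logarithm. Floors and ceilings are omitted where not crucial (quantities such as $K$, $L$, $n/6$ are treated as integers). *)

theory Defs
  imports "HOL-Probability.Probability" "HOL-Combinatorics.Multiset_Permutations"
begin

definition alpha :: "nat \<Rightarrow> real" where
  "alpha n = exp (120 * sqrt (ln (real n)))"

definition Lpar :: "nat \<Rightarrow> real" where
  "Lpar n = sqrt (real n)"

definition Kpar :: "nat \<Rightarrow> nat" where
  "Kpar n = nat \<lfloor>sqrt (real n) / 12\<rfloor>"

definition rD :: "nat \<Rightarrow> nat set \<Rightarrow> real" where
  "rD n D = real (card (D \<inter> {1..n div 3})) - real n / 6"

definition sD :: "nat \<Rightarrow> nat set \<Rightarrow> real" where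
  "sD n D = real (card (D \<inter> {n div 3 + 1..n})) - real n / 3"

definition box :: "nat \<Rightarrow> int \<Rightarrow> int \<Rightarrow> nat set set" where
  "box n i j = {D. D \<subseteq> {1..n} \<and>
      \<bar>rD n D - 2 * real_of_int i * Lpar n\<bar> \<le> Lpar n \<and>
      \<bar>sD n D - 2 * real_of_int j * Lpar n\<bar> \<le> Lpar n}"

definition random_subset :: "'a set \<Rightarrow> real \<Rightarrow> 'a set pmf" where
  "random_subset A p = map_pmf (\<lambda>f. {x \<in> A. f x}) (Pi_pmf A False (\<lambda>_. bernoulli_pmf p))"

definition p1 :: "nat \<Rightarrow> int \<Rightarrow> real" where
  "p1 n i = 1/2 + 6 * real_of_int i / sqrt (real n)"

definition p2 :: "nat \<Rightarrow> int \<Rightarrow> real" where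
  "p2 n j = 1/2 + 3 * real_of_int j / sqrt (real n)"

definition C_pmf :: "nat \<Rightarrow> int \<Rightarrow> int \<Rightarrow> nat \<Rightarrow> nat set pmf" where
  "C_pmf n i j k =
    do {
      U \<leftarrow> pmf_of_set {U. U \<subseteq> {1..n div 3} \<and> card U = Kpar n};
      S1 \<leftarrow> random_subset ({1..n div 3} - U) (p1 n i);
      V \<leftarrow> pmf_of_set {V. V \<subseteq> {n div 3 + 1..n} \<and> card V = 2 * Kpar n};
      S2 \<leftarrow> random_subset ({n div 3 + 1..n} - V) (p2 n j);
      us \<leftarrow> pmf_of_set (permutations_of_set U);
      vs \<leftarrow> pmf_of_set (permutations_of_set V);
      return_pmf (set (take k us) \<union> S1 \<union> set (drop (2 * Kpar n - 2 * k) vs) \<union> S2)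
    }"

end

theory Submission
  imports Defs
begin

lemma ln_lower:
  fixes x :: real assumes "-1/2 \<le> x" "x \<le> 1/2"
  shows "x - x\<^sup>2 \<le> ln (1 + x)"
proof (cases "x \<ge> 0")
  case True then show ?thesis using ln_one_plus_pos_lower_bound assms by auto
next
  case False
  define g where "g = (\<lambda>y::real. ln (1 + y) - y + y\<^sup>2)"
  have d: "(g has_real_derivative (1/(1+y) - 1 + 2*y)) (at y)" if "y \<in> {x..0}" for y
    using that assms unfolding g_def
    by (auto intro!: derivative_eq_intros)
  have nn: "1/(1+y) - 1 + 2*y \<le> 0" if "y \<in> {x..0}" for y
  proof -
    have "1/(1+y) - 1 + 2*y = y*(1+2*y)/(1+y)" using that assms by (auto simp: field_simps)
    also have "\<dots> \<le> 0" using that assms by (auto intro!: divide_nonpos_pos mult_nonpos_nonneg)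
    finally show ?thesis .
  qed
  have "g 0 \<le> g x" by (rule deriv_nonpos_imp_antimono[OF d nn]) (use False in auto)
  then show ?thesis unfolding g_def by simp
qed

lemma pow_lower:
  fixes x :: real assumes "-1/2 \<le> x" "x \<le> 1/2"
  shows "exp (real N * (x - x\<^sup>2)) \<le> (1 + x) ^ N"
proof -
  have "exp (real N * (x - x\<^sup>2)) \<le> exp (real N * ln (1 + x))"
    using ln_lower[OF assms] by (intro exp_mono mult_left_mono) auto
  also have "\<dots> = (1 + x) ^ N" using assms by (simp add: exp_of_nat_mult)
  finally show ?thesis .
qed

lemma bind_ge_point:
  "pmf M y * pmf (f y) x \<le> pmf (bind_pmf M f) x"
proof -
  have "ennreal (pmf M y * pmf (f y) x) = (\<integral>\<^sup>+z. ennreal (pmf (f z) x) * indicator {y} z \<partial>measure_pmf M)"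
    by (simp add: nn_integral_cmult_indicator ennreal_mult' emeasure_pmf_single mult.commute)
  also have "\<dots> \<le> (\<integral>\<^sup>+z. ennreal (pmf (f z) x) \<partial>measure_pmf M)"
    by (intro nn_integral_mono) (auto simp: indicator_def)
  also have "\<dots> = ennreal (pmf (bind_pmf M f) x)" by (simp add: ennreal_pmf_bind)
  finally show ?thesis by (subst (asm) ennreal_le_iff) auto
qed

lemma pmf_random_subset:
  assumes "finite A" "T \<subseteq> A" "0 \<le> p" "p \<le> 1"
  shows "p ^ card T * (1 - p) ^ card (A - T) \<le> pmf (random_subset A p) T"
proof -
  define f where "f = (\<lambda>x. x \<in> T)"
  have "pmf (Pi_pmf A False (\<lambda>_. bernoulli_pmf p)) f = (\<Prod>x\<in>A. pmf (bernoulli_pmf p) (f x))"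
    using assms by (intro pmf_Pi') (auto simp: f_def)
  also have "\<dots> = (\<Prod>x\<in>T. p) * (\<Prod>x\<in>A-T. 1 - p)"
  proof -
    have "A = T \<union> (A - T)" using assms by auto
    then have "(\<Prod>x\<in>A. pmf (bernoulli_pmf p) (f x)) = (\<Prod>x\<in>T. pmf (bernoulli_pmf p) (f x)) * (\<Prod>x\<in>A-T. pmf (bernoulli_pmf p) (f x))"
      using assms by (metis Diff_disjoint finite_Diff finite_subset prod.union_disjoint)
    also have "\<dots> = (\<Prod>x\<in>T. p) * (\<Prod>x\<in>A-T. 1 - p)"
      using assms by (intro arg_cong2[where f="(*)"] prod.cong) (auto simp: f_def)
    finally show ?thesis .
  qed
  also have "\<dots> = p ^ card T * (1 - p) ^ card (A - T)" by simp
  finally have eq: "pmf (Pi_pmf A False (\<lambda>_. bernoulli_pmf p)) f = p ^ card T * (1 - p) ^ card (A - T)" .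
  have "pmf (Pi_pmf A False (\<lambda>_. bernoulli_pmf p)) f = measure (Pi_pmf A False (\<lambda>_. bernoulli_pmf p)) {f}"
    by (simp add: measure_pmf_single)
  also have "\<dots> \<le> measure (Pi_pmf A False (\<lambda>_. bernoulli_pmf p)) ((\<lambda>f. {x \<in> A. f x}) -` {T})"
    using assms by (intro measure_pmf.finite_measure_mono) (auto simp: f_def)
  also have "\<dots> = pmf (random_subset A p) T"
    by (simp add: random_subset_def pmf_map)
  finally show ?thesis using eq by simp
qed

lemma fact_lower: "fact a * (a+1)^k \<le> (fact (a+k) :: nat)"
proof (induction k)
  case 0 then show ?case by simp
next
  case (Suc k)
  have "fact a * (a+1)^Suc k = (a+1) * (fact a * (a+1)^k)" by (simp add: algebra_simps)
  also have "\<dots> \<le> (a + k + 1) * fact (a+k)" using Suc by (intro mult_mono) auto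
  also have "\<dots> = fact (a + Suc k)" by (simp add: algebra_simps)
  finally show ?case .
qed

lemma fact_upper: "(fact (a+k) :: nat) \<le> fact a * (a+k)^k"
proof (induction k)
  case 0 then show ?case by simp
next
  case (Suc k)
  have "(fact (a + Suc k)::nat) = (a + k + 1) * fact (a+k)" by (simp add: algebra_simps)
  also have "\<dots> \<le> (a+k+1) * (fact a * (a+k)^k)" using Suc by (intro mult_mono) auto
  also have "\<dots> \<le> (a+k+1) * (fact a * (a+k+1)^k)" by (intro mult_mono power_mono) auto
  also have "\<dots> = fact a * (a + Suc k)^Suc k" by (simp add: algebra_simps)
  finally show ?case .
qed

lemma perm_count:
  assumes "finite X" "finite Y" "X \<inter> Y = {}"
  shows "fact (card X) * fact (card Y) \<le> card {zs \<in> permutations_of_set (X \<union> Y). set (take (card X) zs) = X}"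
proof -
  let ?g = "\<lambda>(xs, ys). xs @ ys"
  have sub: "?g ` (permutations_of_set X \<times> permutations_of_set Y) \<subseteq> {zs \<in> permutations_of_set (X \<union> Y). set (take (card X) zs) = X}"
    using assms by (auto simp: permutations_of_set_def distinct_card[symmetric])
  have inj: "inj_on ?g (permutations_of_set X \<times> permutations_of_set Y)"
    by (auto simp: inj_on_def permutations_of_set_def distinct_card[symmetric])
  have fin: "finite {zs \<in> permutations_of_set (X \<union> Y). set (take (card X) zs) = X}"
    using assms by auto
  have "fact (card X) * fact (card Y) = card (?g ` (permutations_of_set X \<times> permutations_of_set Y))"
    using assms by (simp add: card_image[OF inj] card_cartesian_product)
  also have "\<dots> \<le> card {zs \<in> permutations_of_set (X \<union> Y). set (take (card X) zs) = X}" by (rule card_mono[OF fin sub])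
  finally show ?thesis .
qed

lemma subset_count:
  assumes "finite A" "B \<subseteq> A" "k \<le> K"
  shows "(card B choose k) * (card (A - B) choose (K - k)) \<le> card {U. U \<subseteq> A \<and> card U = K \<and> card (U \<inter> B) = k}"
proof -
  let ?g = "\<lambda>(W, W'). W \<union> W'"
  let ?P = "{W. W \<subseteq> B \<and> card W = k} \<times> {W'. W' \<subseteq> A - B \<and> card W' = K - k}"
  have fB: "finite B" using assms finite_subset by blast
  have sub: "?g ` ?P \<subseteq> {U. U \<subseteq> A \<and> card U = K \<and> card (U \<inter> B) = k}"
  proof
    fix U assume "U \<in> ?g ` ?P"
    then obtain W W' where h: "W \<subseteq> B" "W' \<subseteq> A - B" "card W' = K - k" "card W = k" "U = W \<union> W'"
      by auto
    then have fW: "finite W" "finite W'" using fB assms finite_subset by (blast, meson finite_Diff finite_subset)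
    have "W \<inter> W' = {}" using h by auto
    then have "card U = K" using h fW assms by (simp add: card_Un_disjoint)
    moreover have "U \<inter> B = W" using h by auto
    ultimately show "U \<in> {U. U \<subseteq> A \<and> card U = K \<and> card (U \<inter> B) = k}" using h assms by auto
  qed
  have inj: "inj_on ?g ?P"
  proof (rule inj_onI, clarsimp)
    fix W1 W1' W2 W2' assume h: "W1 \<subseteq> B" "W1' \<subseteq> A - B" "W2 \<subseteq> B" "W2' \<subseteq> A - B" "W1 \<union> W1' = W2 \<union> W2'"
    have "W1 = (W1 \<union> W1') \<inter> B" "W2 = (W2 \<union> W2') \<inter> B" using h by auto
    moreover have "W1' = (W1 \<union> W1') - B" "W2' = (W2 \<union> W2') - B" using h by auto
    ultimately show "W1 = W2 \<and> W1' = W2'" using h by metis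
  qed
  have fin: "finite {U. U \<subseteq> A \<and> card U = K \<and> card (U \<inter> B) = k}"
    using assms by auto
  have "(card B choose k) * (card (A - B) choose (K - k)) = card ?P"
    using assms fB by (simp add: card_cartesian_product n_subsets)
  also have "\<dots> = card (?g ` ?P)" by (simp add: card_image[OF inj])
  also have "\<dots> \<le> card {U. U \<subseteq> A \<and> card U = K \<and> card (U \<inter> B) = k}" by (rule card_mono[OF fin sub])
  finally show ?thesis .
qed

lemma bind_point:
  assumes "c \<le> pmf M y" "d \<le> pmf (f y) x" "0 \<le> c" "0 \<le> d"
  shows "c * d \<le> pmf (bind_pmf M f) x"
proof -
  have "c * d \<le> pmf M y * pmf (f y) x" using assms by (intro mult_mono) auto
  also have "\<dots> \<le> pmf (bind_pmf M f) x" by (rule bind_ge_point)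
  finally show ?thesis .
qed

lemma bind_set:
  assumes "finite S" "S \<noteq> {}" "G \<subseteq> S" "\<And>y. y \<in> G \<Longrightarrow> c \<le> pmf (f y) x" "0 \<le> c"
  shows "real (card G) * c / real (card S) \<le> pmf (bind_pmf (pmf_of_set S) f) x"
proof -
  have "real (card G) * c = (\<Sum>y\<in>G. c)" by simp
  also have "\<dots> \<le> (\<Sum>y\<in>G. pmf (f y) x)" using assms by (intro sum_mono) auto
  also have "\<dots> \<le> (\<Sum>y\<in>S. pmf (f y) x)" using assms by (intro sum_mono2) auto
  finally have "real (card G) * c \<le> (\<Sum>y\<in>S. pmf (f y) x)" .
  then show ?thesis using assms by (simp add: pmf_bind_pmf_of_set divide_right_mono)
qed

lemma set_drop_eq:
  assumes "distinct vs" "set vs = X \<union> Y" "X \<inter> Y = {}" "set (take m vs) = X"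
  shows "set (drop m vs) = Y"
proof -
  have "set vs = set (take m vs) \<union> set (drop m vs)" by (metis append_take_drop_id set_append)
  moreover have "set (take m vs) \<inter> set (drop m vs) = {}"
    using assms(1) by (metis append_take_drop_id distinct_append)
  ultimately show ?thesis using assms by blast
qed

lemma inner:
  assumes fin: "finite U" "finite V" and cU: "card U = K" "card (U \<inter> B) = k"
    and cV: "card V = 2*K" "card (V \<inter> B) = 2*k" and kK: "k \<le> K"
    and eq: "(U \<inter> B) \<union> X1 \<union> (V \<inter> B) \<union> X2 = B"
  shows "real (fact k * fact (K-k)) / real (fact K) * (real (fact (2*k) * fact (2*K-2*k)) / real (fact (2*K)))
    \<le> pmf (pmf_of_set (permutations_of_set U) \<bind> (\<lambda>us. pmf_of_set (permutations_of_set V) \<bind>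
           (\<lambda>vs. return_pmf (set (take k us) \<union> X1 \<union> set (drop (2*K-2*k) vs) \<union> X2)))) B"
proof -
  define GUS where "GUS = {us \<in> permutations_of_set U. set (take k us) = U \<inter> B}"
  define GVS where "GVS = {vs \<in> permutations_of_set V. set (take (2*K-2*k) vs) = V - B}"
  have cUB: "card (U - B) = K - k" using cU fin by (simp add: card_Diff_subset_Int)
  have cVB: "card (V - B) = 2*K - 2*k" using cV fin by (simp add: card_Diff_subset_Int)
  have gus: "fact k * fact (K-k) \<le> card GUS"
  proof -
    have "fact (card (U \<inter> B)) * fact (card (U - B)) \<le> card {zs \<in> permutations_of_set ((U \<inter> B) \<union> (U - B)). set (take (card (U \<inter> B)) zs) = U \<inter> B}"
      using fin by (intro perm_count) auto
    moreover have "(U \<inter> B) \<union> (U - B) = U" by auto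
    ultimately show ?thesis using cU cUB by (simp add: GUS_def)
  qed
  have gvs: "fact (2*K-2*k) * fact (2*k) \<le> card GVS"
  proof -
    have "fact (card (V - B)) * fact (card (V \<inter> B)) \<le> card {zs \<in> permutations_of_set ((V - B) \<union> (V \<inter> B)). set (take (card (V - B)) zs) = V - B}"
      using fin by (intro perm_count) auto
    moreover have "(V - B) \<union> (V \<inter> B) = V" by auto
    ultimately show ?thesis using cV cVB by (simp add: GVS_def)
  qed
  have step: "real (card GVS) * 1 / real (card (permutations_of_set V)) \<le>
      pmf (pmf_of_set (permutations_of_set V) \<bind> (\<lambda>vs. return_pmf (set (take k us) \<union> X1 \<union> set (drop (2*K-2*k) vs) \<union> X2))) B"
    if "us \<in> GUS" for us
  proof (rule bind_set)
    show "GVS \<subseteq> permutations_of_set V" by (auto simp: GVS_def)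
    fix vs assume "vs \<in> GVS"
    then have "set (drop (2*K-2*k) vs) = V \<inter> B"
      by (intro set_drop_eq[where X="V - B"]) (auto simp: GVS_def permutations_of_set_def)
    moreover have "set (take k us) = U \<inter> B" using that by (simp add: GUS_def)
    ultimately have "set (take k us) \<union> X1 \<union> set (drop (2*K-2*k) vs) \<union> X2 = B" using eq by simp
    then show "1 \<le> pmf (return_pmf (set (take k us) \<union> X1 \<union> set (drop (2*K-2*k) vs) \<union> X2)) B"
      by simp
  qed (use fin in \<open>auto simp: permutations_of_set_nonempty\<close>)
  have main: "real (card GUS) * (real (card GVS) * 1 / real (card (permutations_of_set V))) / real (card (permutations_of_set U)) \<le> pmf (pmf_of_set (permutations_of_set U) \<bind> (\<lambda>us. pmf_of_set (permutations_of_set V) \<bind>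
           (\<lambda>vs. return_pmf (set (take k us) \<union> X1 \<union> set (drop (2*K-2*k) vs) \<union> X2)))) B"
    by (rule bind_set) (use fin step in \<open>auto simp: GUS_def permutations_of_set_nonempty\<close>)
  have "real (fact k * fact (K-k)) / real (fact K) * (real (fact (2*k) * fact (2*K-2*k)) / real (fact (2*K)))
     \<le> real (card GUS) / real (fact K) * (real (card GVS) / real (fact (2*K)))"
    using gus gvs by (intro mult_mono divide_right_mono) (auto simp: mult.commute simp del: of_nat_mult intro!: of_nat_mono)
  also have "\<dots> = real (card GUS) * (real (card GVS) * 1 / real (card (permutations_of_set V))) / real (card (permutations_of_set U))"
    using fin cU cV by simp
  finally show ?thesis using main by linarith
qed

lemma core:
  fixes A1 A2 B :: "nat set" and K k :: nat and p q :: real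
  assumes fin: "finite A1" "finite A2" and disj: "A1 \<inter> A2 = {}" and B: "B \<subseteq> A1 \<union> A2"
    and kK: "k \<le> K" and pq: "0 \<le> p" "p \<le> 1" "0 \<le> q" "q \<le> 1"
    and KA1: "K \<le> card A1" and KA2: "2*K \<le> card A2"
  shows "(real ((card (B \<inter> A1) choose k) * (card (A1 - B) choose (K-k))) / real (card A1 choose K)
            * (real (fact k * fact (K-k)) / real (fact K))
            * (p ^ (card (B \<inter> A1) - k) * (1-p) ^ (card (A1 - B) - (K-k))))
       * (real ((card (B \<inter> A2) choose (2*k)) * (card (A2 - B) choose (2*K-2*k))) / real (card A2 choose (2*K))
            * (real (fact (2*k) * fact (2*K-2*k)) / real (fact (2*K)))
            * (q ^ (card (B \<inter> A2) - 2*k) * (1-q) ^ (card (A2 - B) - (2*K-2*k))))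
    \<le> pmf (do {
      U \<leftarrow> pmf_of_set {U. U \<subseteq> A1 \<and> card U = K};
      S1 \<leftarrow> random_subset (A1 - U) p;
      V \<leftarrow> pmf_of_set {V. V \<subseteq> A2 \<and> card V = 2 * K};
      S2 \<leftarrow> random_subset (A2 - V) q;
      us \<leftarrow> pmf_of_set (permutations_of_set U);
      vs \<leftarrow> pmf_of_set (permutations_of_set V);
      return_pmf (set (take k us) \<union> S1 \<union> set (drop (2 * K - 2 * k) vs) \<union> S2)
    }) B"
proof -
  define B1 where "B1 = B \<inter> A1"
  define B2 where "B2 = B \<inter> A2"
  define GU where "GU = {U. U \<subseteq> A1 \<and> card U = K \<and> card (U \<inter> B1) = k}"
  define GV where "GV = {V. V \<subseteq> A2 \<and> card V = 2*K \<and> card (V \<inter> B2) = 2*k}"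
  define SU where "SU = {U. U \<subseteq> A1 \<and> card U = K}"
  define SV where "SV = {V. V \<subseteq> A2 \<and> card V = 2*K}"
  define c1 where "c1 = p ^ (card B1 - k) * (1-p) ^ (card (A1 - B1) - (K-k))"
  define c2 where "c2 = q ^ (card B2 - 2*k) * (1-q) ^ (card (A2 - B2) - (2*K-2*k))"
  define d where "d = real (fact k * fact (K-k)) / real (fact K) * (real (fact (2*k) * fact (2*K-2*k)) / real (fact (2*K)))"
  have c1: "0 \<le> c1" using pq by (simp add: c1_def)
  have c2: "0 \<le> c2" using pq by (simp add: c2_def)
  have d: "0 \<le> d" by (simp add: d_def)
  have fSU: "finite SU" "SU \<noteq> {}" "card SU = card A1 choose K"
  proof -
    obtain T where "T \<subseteq> A1" "card T = K" using obtain_subset_with_card_n[OF KA1] by metis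
    then show "SU \<noteq> {}" by (auto simp: SU_def)
  qed (use fin in \<open>auto simp: SU_def n_subsets\<close>)
  have fSV: "finite SV" "SV \<noteq> {}" "card SV = card A2 choose (2*K)"
  proof -
    obtain T where "T \<subseteq> A2" "card T = (2*K)" using obtain_subset_with_card_n[OF KA2] by metis
    then show "SV \<noteq> {}" by (auto simp: SV_def)
  qed (use fin in \<open>auto simp: SV_def n_subsets\<close>)
  have rsU: "c1 \<le> pmf (random_subset (A1 - U) p) (B1 - U)" if "U \<in> GU" for U
  proof -
    have fU: "finite U" using that fin by (auto simp: GU_def intro: finite_subset)
    have "card (B1 - U) = card B1 - k" using that fin
      by (simp add: GU_def B1_def card_Diff_subset_Int Int_commute)
    moreover have "(A1 - U) - (B1 - U) = (A1 - B1) - U" by auto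
    moreover have "card ((A1 - B1) - U) = card (A1 - B1) - (K - k)"
    proof -
      have "card U = card (U \<inter> B1) + card (U - B1)" using fU by (metis card_Int_Diff)
      then have e2: "card (U - B1) = K - k" using that unfolding GU_def mem_Collect_eq by linarith
      have e3: "(A1 - B1) \<inter> U = U - B1" using that by (auto simp: GU_def)
      have e1: "card ((A1 - B1) - U) = card (A1 - B1) - card ((A1 - B1) \<inter> U)"
        using fin by (intro card_Diff_subset_Int) auto
      show ?thesis using e1 e2 e3 by simp
    qed
    ultimately show ?thesis using pmf_random_subset[of "A1 - U" "B1 - U" p] fin pq
      by (auto simp: c1_def B1_def)
  qed
  have rsV: "c2 \<le> pmf (random_subset (A2 - V) q) (B2 - V)" if "V \<in> GV" for V
  proof -
    have fV: "finite V" using that fin by (auto simp: GV_def intro: finite_subset)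
    have "card (B2 - V) = card B2 - 2*k" using that fin
      by (simp add: GV_def B2_def card_Diff_subset_Int Int_commute)
    moreover have "(A2 - V) - (B2 - V) = (A2 - B2) - V" by auto
    moreover have "card ((A2 - B2) - V) = card (A2 - B2) - (2*K - 2*k)"
    proof -
      have "card V = card (V \<inter> B2) + card (V - B2)" using fV by (metis card_Int_Diff)
      then have e2: "card (V - B2) = 2*K - 2*k" using that unfolding GV_def mem_Collect_eq by linarith
      have e3: "(A2 - B2) \<inter> V = V - B2" using that by (auto simp: GV_def)
      have e1: "card ((A2 - B2) - V) = card (A2 - B2) - card ((A2 - B2) \<inter> V)"
        using fin by (intro card_Diff_subset_Int) auto
      show ?thesis using e1 e2 e3 by simp
    qed
    ultimately show ?thesis using pmf_random_subset[of "A2 - V" "B2 - V" q] fin pq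
      by (auto simp: c2_def B2_def)
  qed
  have inn: "d \<le> pmf (pmf_of_set (permutations_of_set U) \<bind> (\<lambda>us. pmf_of_set (permutations_of_set V) \<bind>
           (\<lambda>vs. return_pmf (set (take k us) \<union> (B1 - U) \<union> set (drop (2*K-2*k) vs) \<union> (B2 - V))))) B"
    if "U \<in> GU" "V \<in> GV" for U V
    unfolding d_def
  proof (rule inner)
    show "finite U" "finite V" using that fin by (auto simp: GU_def GV_def intro: finite_subset)
    show "card U = K" "card V = 2*K" using that by (auto simp: GU_def GV_def)
    have "U \<inter> B = U \<inter> B1" "V \<inter> B = V \<inter> B2" using that by (auto simp: GU_def GV_def B1_def B2_def)
    then show "card (U \<inter> B) = k" "card (V \<inter> B) = 2*k" using that by (auto simp: GU_def GV_def)
    show "k \<le> K" by (rule kK)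
    show "U \<inter> B \<union> (B1 - U) \<union> V \<inter> B \<union> (B2 - V) = B"
      using that B by (auto simp: GU_def GV_def B1_def B2_def)
  qed
  have final: "real (card GU) * (c1 * (real (card GV) * (c2 * d) / real (card SV))) / real (card SU) \<le> pmf (do {
      U \<leftarrow> pmf_of_set {U. U \<subseteq> A1 \<and> card U = K};
      S1 \<leftarrow> random_subset (A1 - U) p;
      V \<leftarrow> pmf_of_set {V. V \<subseteq> A2 \<and> card V = 2 * K};
      S2 \<leftarrow> random_subset (A2 - V) q;
      us \<leftarrow> pmf_of_set (permutations_of_set U);
      vs \<leftarrow> pmf_of_set (permutations_of_set V);
      return_pmf (set (take k us) \<union> S1 \<union> set (drop (2 * K - 2 * k) vs) \<union> S2)
    }) B"
    unfolding SU_def SV_def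
    apply (rule bind_set[where G=GU])
    subgoal using fSU by (simp add: SU_def)
    subgoal using fSU by (simp add: SU_def)
    subgoal by (auto simp: GU_def)
    subgoal for U
      apply (rule bind_point[where y="B1 - U"])
      subgoal using rsU by blast
      subgoal
        apply (rule bind_set[where G=GV])
        subgoal using fSV by (simp add: SV_def)
        subgoal using fSV by (simp add: SV_def)
        subgoal by (auto simp: GV_def)
        subgoal for V
          apply (rule bind_point[where y="B2 - V"])
          subgoal using rsV by blast
          subgoal by (rule inn) assumption+
          subgoal by (rule c2)
          subgoal by (rule d)
          done
        subgoal using c2 d by simp
        done
      subgoal by (rule c1)
      subgoal using c2 d by simp
      done
    subgoal using c1 c2 d by simp
    done
  have AB1: "A1 - B1 = A1 - B" and AB2: "A2 - B2 = A2 - B" by (auto simp: B1_def B2_def)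
  have g1: "(card B1 choose k) * (card (A1 - B1) choose (K-k)) \<le> card GU"
    unfolding GU_def using fin kK by (intro subset_count) (auto simp: B1_def)
  have g2: "(card B2 choose (2*k)) * (card (A2 - B2) choose (2*K-2*k)) \<le> card GV"
    unfolding GV_def using fin kK by (intro subset_count) (auto simp: B2_def)
  define x1 where "x1 = (card B1 choose k) * (card (A1 - B1) choose (K-k))"
  define x2 where "x2 = (card B2 choose (2*k)) * (card (A2 - B2) choose (2*K-2*k))"
  have pos: "0 \<le> c1 * c2 * d / (real (card SU) * real (card SV))" using c1 c2 d by simp
  have "real (x1 * x2) * (c1 * c2 * d / (real (card SU) * real (card SV)))
      \<le> real (card GU * card GV) * (c1 * c2 * d / (real (card SU) * real (card SV)))"
    using g1 g2 pos unfolding x1_def x2_def by (intro mult_right_mono of_nat_mono mult_mono) auto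
  also have "\<dots> = real (card GU) * (c1 * (real (card GV) * (c2 * d) / real (card SV))) / real (card SU)"
    by (simp add: field_simps)
  finally have *: "real (x1 * x2) * (c1 * c2 * d / (real (card SU) * real (card SV))) \<le> pmf (do {
      U \<leftarrow> pmf_of_set {U. U \<subseteq> A1 \<and> card U = K};
      S1 \<leftarrow> random_subset (A1 - U) p;
      V \<leftarrow> pmf_of_set {V. V \<subseteq> A2 \<and> card V = 2 * K};
      S2 \<leftarrow> random_subset (A2 - V) q;
      us \<leftarrow> pmf_of_set (permutations_of_set U);
      vs \<leftarrow> pmf_of_set (permutations_of_set V);
      return_pmf (set (take k us) \<union> S1 \<union> set (drop (2 * K - 2 * k) vs) \<union> S2)
    }) B" using final by linarith
  have "real (x1 * x2) * (c1 * c2 * d / (real (card SU) * real (card SV))) =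
     (real ((card (B \<inter> A1) choose k) * (card (A1 - B) choose (K-k))) / real (card A1 choose K)
            * (real (fact k * fact (K-k)) / real (fact K))
            * (p ^ (card (B \<inter> A1) - k) * (1-p) ^ (card (A1 - B) - (K-k))))
       * (real ((card (B \<inter> A2) choose (2*k)) * (card (A2 - B) choose (2*K-2*k))) / real (card A2 choose (2*K))
            * (real (fact (2*k) * fact (2*K-2*k)) / real (fact (2*K)))
            * (q ^ (card (B \<inter> A2) - 2*k) * (1-q) ^ (card (A2 - B) - (2*K-2*k))))"
    unfolding x1_def x2_def c1_def c2_def d_def fSU(3) fSV(3) AB1 AB2 B1_def B2_def
    using AB1 AB2 by (simp only: of_nat_mult B1_def B2_def) (simp add: field_simps)
  with * show ?thesis by simp
qed

lemma choose_fact_lower: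
  assumes "kk \<le> b"
  shows "real (b - kk + 1) ^ kk \<le> real ((b choose kk) * fact kk)"
proof -
  have "fact (b - kk) * (b - kk + 1) ^ kk \<le> (fact (b - kk + kk) :: nat)" by (rule fact_lower)
  also have "\<dots> = fact b" using assms by simp
  also have "\<dots> = fact (b - kk) * ((b choose kk) * fact kk)"
    using binomial_fact_lemma[OF assms] by (simp add: algebra_simps)
  finally have "(b - kk + 1) ^ kk \<le> (b choose kk) * fact kk" by (simp add: fact_gt_zero)
  then show ?thesis by (metis of_nat_le_iff of_nat_power)
qed

lemma choose_fact_upper:
  assumes "c \<le> m"
  shows "real ((m choose c) * fact c) \<le> real m ^ c"
proof -
  have "fact (m - c) * ((m choose c) * fact c) = fact m"
    using binomial_fact_lemma[OF assms] by (simp add: algebra_simps)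
  also have "(fact m :: nat) = fact (m - c + c)" using assms by simp
  also have "\<dots> \<le> fact (m - c) * (m - c + c) ^ c" by (rule fact_upper)
  also have "\<dots> = fact (m - c) * m ^ c" using assms by simp
  finally have "(m choose c) * fact c \<le> m ^ c" by (simp add: fact_gt_zero)
  then show ?thesis by (metis of_nat_le_iff of_nat_power)
qed

lemma comb_bound:
  fixes m b c kk :: nat and p e D :: real
  assumes m: "m > 0" and kk: "kk \<le> c" and D: "0 \<le> D" "D \<le> real m / 4"
    and h1: "real b - real kk \<ge> real m / 2 - D" and h2: "real m - real b - (real c - real kk) \<ge> real m / 2 - D"
    and b: "b \<le> m"
    and p: "p = 1/2 + e" and e: "\<bar>e\<bar> \<le> 1/4"
  shows "exp (-(4 * c * D / m) - 2 * c * \<bar>e\<bar>) * (p ^ b * (1-p) ^ (m-b))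
    \<le> real ((b choose kk) * ((m-b) choose (c-kk))) / real (m choose c) * (real (fact kk * fact (c-kk)) / real (fact c))
        * (p ^ (b-kk) * (1-p) ^ ((m-b)-(c-kk)))"
proof -
  define y where "y = real m / 2 - D"
  have y0: "y > 0" using D m unfolding y_def by simp
  have kb: "kk \<le> b" using h1 y0 unfolding y_def by linarith
  have ck: "c - kk \<le> m - b" using h2 y0 b kk unfolding y_def by linarith
  have cm: "c \<le> m" using kb ck kk b by linarith
  have A: "y ^ kk \<le> real ((b choose kk) * fact kk)"
  proof -
    have "y ^ kk \<le> real (b - kk + 1) ^ kk"
      using y0 h1 kb unfolding y_def by (intro power_mono) (auto simp: of_nat_diff)
    also have "\<dots> \<le> real ((b choose kk) * fact kk)" by (rule choose_fact_lower[OF kb])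
    finally show ?thesis .
  qed
  have B: "y ^ (c - kk) \<le> real (((m - b) choose (c - kk)) * fact (c - kk))"
  proof -
    have "y ^ (c - kk) \<le> real (m - b - (c - kk) + 1) ^ (c - kk)"
      using y0 h2 ck kk b unfolding y_def by (intro power_mono) (auto simp: of_nat_diff)
    also have "\<dots> \<le> real (((m - b) choose (c - kk)) * fact (c - kk))" by (rule choose_fact_lower[OF ck])
    finally show ?thesis .
  qed
  have C: "real ((m choose c) * fact c) \<le> real m ^ c" by (rule choose_fact_upper[OF cm])
  have Cpos: "0 < real ((m choose c) * fact c)" using cm by (simp add: fact_gt_zero)
  define x where "x = 2 * D / real m"
  have x: "0 \<le> x" "x \<le> 1/2" using D m unfolding x_def by (auto simp: field_simps)
  have comb: "(y / real m) ^ c \<le> real ((b choose kk) * ((m-b) choose (c-kk))) / real (m choose c) * (real (fact kk * fact (c-kk)) / real (fact c))"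
  proof -
    have "(y / real m) ^ c = y ^ kk * y ^ (c - kk) / real m ^ c"
      using kk by (simp add: power_divide power_add[symmetric])
    also have "\<dots> \<le> real ((b choose kk) * fact kk) * real (((m - b) choose (c - kk)) * fact (c - kk)) / real ((m choose c) * fact c)"
      using A B C Cpos y0 by (intro frac_le mult_mono) auto
    also have "\<dots> = real ((b choose kk) * ((m-b) choose (c-kk))) / real (m choose c) * (real (fact kk * fact (c-kk)) / real (fact c))"
      by (simp add: field_simps)
    finally show ?thesis .
  qed
  have ym: "y / real m = (1 - x) / 2" using m unfolding x_def y_def by (simp add: field_simps)
  have p0: "0 < p" "0 < 1 - p" using p e by auto
  have bern: "p ^ (b-kk) * (1-p) ^ ((m-b)-(c-kk)) * (p ^ kk * (1-p) ^ (c-kk)) = p ^ b * (1-p) ^ (m-b)"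
  proof -
    have "p ^ (b-kk) * p ^ kk = p ^ b" using kb by (simp add: power_add[symmetric])
    moreover have "(1-p) ^ ((m-b)-(c-kk)) * (1-p) ^ (c-kk) = (1-p) ^ (m-b)"
      using ck by (metis le_add_diff_inverse2 power_add)
    ultimately show ?thesis by (simp add: algebra_simps)
  qed
  have P2: "p ^ kk * (1-p) ^ (c-kk) \<le> ((1 + 2 * \<bar>e\<bar>) / 2) ^ c"
  proof -
    have "p ^ kk * (1-p) ^ (c-kk) \<le> ((1 + 2 * \<bar>e\<bar>) / 2) ^ kk * ((1 + 2 * \<bar>e\<bar>) / 2) ^ (c-kk)"
      using p0 p by (intro mult_mono power_mono) auto
    also have "\<dots> = ((1 + 2 * \<bar>e\<bar>) / 2) ^ c" using kk by (simp add: power_add[symmetric])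
    finally show ?thesis .
  qed
  have E1: "exp (-(4 * c * D / m)) \<le> (1 - x) ^ c"
  proof -
    have "exp (real c * (-x - (-x)\<^sup>2)) \<le> (1 + -x) ^ c" using x by (intro pow_lower) auto
    moreover have "exp (-(4 * c * D / m)) \<le> exp (real c * (-x - (-x)\<^sup>2))"
    proof -
      have "x\<^sup>2 \<le> x" using x mult_left_le_one_le[of x x] by (simp add: power2_eq_square)
      then have "real c * (-2 * x) \<le> real c * (-x - (-x)\<^sup>2)"
        by (intro mult_left_mono) auto
      moreover have "real c * (-2 * x) = -(4 * c * D / m)" unfolding x_def by simp
      ultimately have "-(4 * c * D / m) \<le> real c * (-x - (-x)\<^sup>2)" by simp
      then show ?thesis by simp
    qed
    ultimately show ?thesis by (metis order_trans diff_conv_add_uminus)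
  qed
  have E2: "(1 + 2 * \<bar>e\<bar>) ^ c \<le> exp (2 * c * \<bar>e\<bar>)"
  proof -
    have "(1 + 2 * \<bar>e\<bar>) ^ c \<le> exp (2 * \<bar>e\<bar>) ^ c"
      by (intro power_mono) (auto simp: exp_ge_add_one_self add_nonneg_nonneg)
    also have "\<dots> = exp (2 * c * \<bar>e\<bar>)" by (simp add: exp_of_nat_mult[symmetric] algebra_simps)
    finally show ?thesis .
  qed
  define mu where "mu = p ^ b * (1-p) ^ (m-b)"
  define Q where "Q = p ^ kk * (1-p) ^ (c-kk)"
  have mu0: "0 \<le> mu" using p0 unfolding mu_def by simp
  have Q0: "0 < Q" using p0 unfolding Q_def by simp
  have bp: "mu / ((1 + 2 * \<bar>e\<bar>) / 2) ^ c \<le> p ^ (b-kk) * (1-p) ^ ((m-b)-(c-kk))"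
  proof -
    have "p ^ (b-kk) * (1-p) ^ ((m-b)-(c-kk)) = mu / Q" using bern Q0 unfolding mu_def Q_def
      by (metis nonzero_eq_divide_eq order_less_irrefl)
    moreover have "mu / ((1 + 2 * \<bar>e\<bar>) / 2) ^ c \<le> mu / Q"
      using P2 Q0 mu0 unfolding Q_def by (intro divide_left_mono) auto
    ultimately show ?thesis by simp
  qed
  have ex: "exp (-(4 * c * D / m) - 2 * c * \<bar>e\<bar>) \<le> (1 - x) ^ c / (1 + 2 * \<bar>e\<bar>) ^ c"
  proof -
    have "exp (-(4 * c * D / m) - 2 * c * \<bar>e\<bar>) = exp (-(4 * c * D / m)) / exp (2 * c * \<bar>e\<bar>)"
      by (simp add: exp_diff)
    also have "\<dots> \<le> (1 - x) ^ c / (1 + 2 * \<bar>e\<bar>) ^ c"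
      using E1 E2 x by (intro frac_le) (auto simp: add_pos_nonneg)
    finally show ?thesis .
  qed
  have "exp (-(4 * c * D / m) - 2 * c * \<bar>e\<bar>) * mu \<le> (1 - x) ^ c / (1 + 2 * \<bar>e\<bar>) ^ c * mu"
    using ex mu0 by (rule mult_right_mono)
  also have "\<dots> = ((1 - x) / 2) ^ c * (mu / ((1 + 2 * \<bar>e\<bar>) / 2) ^ c)"
    by (simp add: power_divide field_simps)
  also have "\<dots> \<le> real ((b choose kk) * ((m-b) choose (c-kk))) / real (m choose c) * (real (fact kk * fact (c-kk)) / real (fact c))
        * (p ^ (b-kk) * (1-p) ^ ((m-b)-(c-kk)))"
    using comb bp x mu0 unfolding ym[symmetric] by (intro mult_mono) (auto simp: y0 m)
  finally show ?thesis unfolding mu_def .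
qed

lemma ratio_bound:
  fixes p :: real assumes p: "0 < p" "p < 1" and b: "b \<le> m" "b' \<le> m"
  shows "p ^ b * (1-p) ^ (m-b) \<le> p ^ b' * (1-p) ^ (m-b') * exp (\<bar>real b - real b'\<bar> * \<bar>ln p - ln (1-p)\<bar>)"
proof -
  have eq: "p ^ a * (1-p) ^ (m-a) = exp (real a * ln p + (real m - real a) * ln (1-p))" if "a \<le> m" for a
  proof -
    have 1: "p ^ a = exp (real a * ln p)" using p by (simp add: exp_of_nat_mult)
    have 2: "(1-p) ^ (m-a) = exp (real (m-a) * ln (1-p))" using p by (simp add: exp_of_nat_mult)
    have 3: "real (m - a) = real m - real a" using that by (rule of_nat_diff)
    show ?thesis unfolding 1 2 3 exp_add by simp
  qed
  define Eb where "Eb = real b * ln p + (real m - real b) * ln (1-p)"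
  define Eb' where "Eb' = real b' * ln p + (real m - real b') * ln (1-p)"
  define \<Delta> where "\<Delta> = \<bar>real b - real b'\<bar> * \<bar>ln p - ln (1-p)\<bar>"
  have "Eb = Eb' + (real b - real b') * (ln p - ln (1-p))"
    unfolding Eb_def Eb'_def by (simp add: algebra_simps)
  also have "\<dots> \<le> Eb' + \<Delta>" unfolding \<Delta>_def
    by (metis abs_ge_self abs_mult add_left_mono)
  finally have le: "Eb \<le> Eb' + \<Delta>" .
  have "p ^ b * (1-p) ^ (m-b) = exp Eb" unfolding Eb_def by (rule eq[OF b(1)])
  also have "\<dots> \<le> exp (Eb' + \<Delta>)" using le by simp
  also have "\<dots> = exp Eb' * exp \<Delta>" by (rule exp_add)
  also have "exp Eb' = p ^ b' * (1-p) ^ (m-b')" unfolding Eb'_def by (rule eq[OF b(2), symmetric])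
  finally show ?thesis unfolding \<Delta>_def .
qed

lemma log_ratio:
  fixes e :: real assumes "\<bar>e\<bar> \<le> 1/4"
  shows "\<bar>ln (1/2 + e) - ln (1 - (1/2 + e))\<bar> \<le> 8 * \<bar>e\<bar>"
proof -
  have p: "1/4 \<le> 1/2 + e" "1/4 \<le> 1/2 - e" using assms by auto
  have "ln (1/2 + e) - ln (1/2 - e) = ln ((1/2 + e) / (1/2 - e))" using p by (simp add: ln_div)
  also have "\<dots> \<le> (1/2 + e) / (1/2 - e) - 1" using p by (intro ln_le_minus_one) auto
  also have "\<dots> = 2 * e / (1/2 - e)" using p by (simp add: field_simps)
  also have "\<dots> \<le> 2 * \<bar>e\<bar> / (1/2 - e)" using p by (intro divide_right_mono) auto
  also have "\<dots> \<le> 2 * \<bar>e\<bar> / (1/4)" using p by (intro divide_left_mono) auto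
  finally have 1: "ln (1/2 + e) - ln (1/2 - e) \<le> 8 * \<bar>e\<bar>" by simp
  have "ln (1/2 - e) - ln (1/2 + e) = ln ((1/2 - e) / (1/2 + e))" using p by (simp add: ln_div)
  also have "\<dots> \<le> (1/2 - e) / (1/2 + e) - 1" using p by (intro ln_le_minus_one) auto
  also have "\<dots> = - 2 * e / (1/2 + e)" using p by (simp add: field_simps)
  also have "\<dots> \<le> 2 * \<bar>e\<bar> / (1/2 + e)" using p by (intro divide_right_mono) auto
  also have "\<dots> \<le> 2 * \<bar>e\<bar> / (1/4)" using p by (intro divide_left_mono) auto
  finally have 2: "ln (1/2 - e) - ln (1/2 + e) \<le> 8 * \<bar>e\<bar>" by simp
  show ?thesis using 1 2 by (simp add: abs_le_iff)
qed

lemma binom_window: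
  fixes p L :: real assumes m: "m > 0" and p: "0 \<le> p" "p \<le> 1" and L: "L \<ge> 0"
  shows "1 - 2 * exp (-2 * L\<^sup>2 / m) \<le> (\<Sum>b\<in>{b. b \<le> m \<and> \<bar>real b - m * p\<bar> \<le> L}. real (m choose b) * p ^ b * (1-p) ^ (m-b))"
proof -
  interpret binomial_distribution m p using p by unfold_locales auto
  define W where "W = {b. b \<le> m \<and> \<bar>real b - m * p\<bar> \<le> L}"
  have fW: "finite W" unfolding W_def by auto
  have h: "measure_pmf.prob (binomial_pmf m p) {x. \<bar>real x - m * p\<bar> \<ge> L} \<le> 2 * exp (-2 * L\<^sup>2 / m)"
    using prob_abs_ge[OF m L] .
  have z: "measure_pmf.prob (binomial_pmf m p) {x. m < x} = 0"
    unfolding measure_pmf_zero_iff using p by (auto simp: set_pmf_binomial_eq split: if_splits)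
  have "1 = measure_pmf.prob (binomial_pmf m p) (W \<union> {x. \<bar>real x - m * p\<bar> \<ge> L} \<union> {x. m < x})"
  proof -
    have "W \<union> {x. \<bar>real x - m * p\<bar> \<ge> L} \<union> {x. m < x} = UNIV" unfolding W_def by auto
    then show ?thesis by simp
  qed
  also have "\<dots> \<le> measure_pmf.prob (binomial_pmf m p) W + measure_pmf.prob (binomial_pmf m p) {x. \<bar>real x - m * p\<bar> \<ge> L} + measure_pmf.prob (binomial_pmf m p) {x. m < x}"
    using measure_Un_le[of "W \<union> {x. \<bar>real x - m * p\<bar> \<ge> L}" "measure_pmf (binomial_pmf m p)" "{x. m < x}"]
      measure_Un_le[of W "measure_pmf (binomial_pmf m p)" "{x. \<bar>real x - m * p\<bar> \<ge> L}"] by simp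
  finally have "1 - 2 * exp (-2 * L\<^sup>2 / m) \<le> measure_pmf.prob (binomial_pmf m p) W" using h z by linarith
  also have "\<dots> = (\<Sum>b\<in>W. real (m choose b) * p ^ b * (1-p) ^ (m-b))"
    using fW p by (simp add: measure_measure_pmf_finite)
  finally show ?thesis unfolding W_def .
qed

lemma card_sizes:
  assumes "finite A"
  shows "card {D. D \<subseteq> A \<and> card D \<in> W} = (\<Sum>b\<in>W \<inter> {..card A}. card A choose b)"
proof -
  have eq: "{D. D \<subseteq> A \<and> card D \<in> W} = (\<Union>b\<in>W \<inter> {..card A}. {D. D \<subseteq> A \<and> card D = b})"
    using assms by (auto intro: card_mono)
  have "card (\<Union>b\<in>W \<inter> {..card A}. {D. D \<subseteq> A \<and> card D = b}) = (\<Sum>b\<in>W \<inter> {..card A}. card {D. D \<subseteq> A \<and> card D = b})"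
    using assms by (intro card_UN_disjoint) auto
  also have "\<dots> = (\<Sum>b\<in>W \<inter> {..card A}. card A choose b)"
    using assms by (simp add: n_subsets)
  finally show ?thesis using eq by simp
qed

lemma box_count:
  fixes n :: nat and i j :: int
  defines "W1 \<equiv> {b. b \<le> n div 3 \<and> \<bar>real b - real n / 6 - 2 * real_of_int i * Lpar n\<bar> \<le> Lpar n}"
    and "W2 \<equiv> {b. b \<le> n - n div 3 \<and> \<bar>real b - real n / 3 - 2 * real_of_int j * Lpar n\<bar> \<le> Lpar n}"
  shows "real (\<Sum>b\<in>W1. n div 3 choose b) * real (\<Sum>b\<in>W2. (n - n div 3) choose b) \<le> real (card (box n i j))"
proof -
  define A1 where "A1 = {1..n div 3}"
  define A2 where "A2 = {n div 3 + 1..n}"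
  define F1 where "F1 = {D. D \<subseteq> A1 \<and> card D \<in> W1}"
  define F2 where "F2 = {D. D \<subseteq> A2 \<and> card D \<in> W2}"
  have cA1: "card A1 = n div 3" and cA2: "card A2 = n - n div 3" by (auto simp: A1_def A2_def)
  have W1s: "W1 \<inter> {..n div 3} = W1" unfolding W1_def by auto
  have W2s: "W2 \<inter> {..n - n div 3} = W2" unfolding W2_def by auto
  have cF1: "card F1 = (\<Sum>b\<in>W1. n div 3 choose b)"
    unfolding F1_def using card_sizes[of A1 W1] unfolding cA1 W1s by (simp add: A1_def)
  have cF2: "card F2 = (\<Sum>b\<in>W2. (n - n div 3) choose b)"
    unfolding F2_def using card_sizes[of A2 W2] unfolding cA2 W2s by (simp add: A2_def)
  let ?g = "\<lambda>(D1, D2). D1 \<union> D2"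
  have disj: "A1 \<inter> A2 = {}" by (auto simp: A1_def A2_def)
  have sub: "?g ` (F1 \<times> F2) \<subseteq> box n i j"
  proof
    fix D assume "D \<in> ?g ` (F1 \<times> F2)"
    then obtain D1 D2 where h: "D1 \<in> F1" "D2 \<in> F2" "D = D1 \<union> D2" by auto
    have "D \<inter> {1..n div 3} = D1" using h disj by (auto simp: F1_def F2_def A1_def A2_def)
    moreover have "D \<inter> {n div 3 + 1..n} = D2" using h disj by (auto simp: F1_def F2_def A1_def A2_def)
    moreover have "D \<subseteq> {1..n}"
    proof -
      have "A1 \<union> A2 \<subseteq> {1..n}" by (auto simp: A1_def A2_def)
      moreover have "D \<subseteq> A1 \<union> A2" using h by (auto simp: F1_def F2_def)
      ultimately show ?thesis by blast
    qed
    ultimately show "D \<in> box n i j" using h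
      by (auto simp: box_def rD_def sD_def F1_def F2_def W1_def W2_def algebra_simps)
  qed
  have inj: "inj_on ?g (F1 \<times> F2)"
  proof (rule inj_onI, clarsimp)
    fix D1 D1' D2 D2' assume h: "D1 \<in> F1" "D2 \<in> F2" "D1' \<in> F1" "D2' \<in> F2" "D1 \<union> D2 = D1' \<union> D2'"
    have "D1 = (D1 \<union> D2) \<inter> A1" "D1' = (D1' \<union> D2') \<inter> A1" "D2 = (D1 \<union> D2) \<inter> A2" "D2' = (D1' \<union> D2') \<inter> A2"
      using h disj by (auto simp: F1_def F2_def)
    then show "D1 = D1' \<and> D2 = D2'" using h(5) by metis
  qed
  have fin: "finite (box n i j)"
    by (rule finite_subset[of _ "Pow {1..n}"]) (auto simp: box_def)
  have "card F1 * card F2 = card (?g ` (F1 \<times> F2))"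
    by (simp add: card_image[OF inj] card_cartesian_product)
  also have "\<dots> \<le> card (box n i j)" by (rule card_mono[OF fin sub])
  finally show ?thesis unfolding cF1[symmetric] cF2[symmetric] by (metis of_nat_le_iff of_nat_mult)
qed

lemma s_bound:
  fixes n :: nat assumes n: "n \<ge> 10^4"
  shows "1 \<le> sqrt (ln (real n))" "12 * sqrt (ln (real n)) + 13 \<le> sqrt (real n)"
proof -
  have "(10000::nat) \<le> n" using n by simp
  then have "real (10000::nat) \<le> real n" by (rule of_nat_mono)
  then have n0: "real n \<ge> 10000" by simp
  have "exp 1 \<le> real n" using exp_le n0 by linarith
  then have "ln (exp 1) \<le> ln (real n)" using n0 by (subst ln_le_cancel_iff) auto
  then have "1 \<le> ln (real n)" by simp
  then show "1 \<le> sqrt (ln (real n))" by simp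
  define u where "u = sqrt (sqrt (real n))"
  define w where "w = sqrt u"
  have u0: "u > 0" unfolding u_def using n0 by simp
  have w0: "w > 0" unfolding w_def using u0 by simp
  have uw: "u = w^2" unfolding w_def using u0 by simp
  have u2: "u^2 = sqrt (real n)" unfolding u_def by simp
  have nu: "real n = u ^ 4"
  proof -
    have "u ^ 4 = (u^2)^2" by (simp add: power_mult[symmetric])
    then show ?thesis using u2 by simp
  qed
  have L: "sqrt (real n) = w ^ 4"
  proof -
    have "w ^ 4 = (w^2)^2" by (simp add: power_mult[symmetric])
    then show ?thesis using u2 uw by simp
  qed
  have "ln (real n) = 4 * ln u" using nu u0 by (simp add: ln_realpow)
  also have "\<dots> \<le> 4 * (u - 1)" using ln_le_minus_one[OF u0] by simp
  also have "\<dots> \<le> (2 * w)^2" using uw by (simp add: power_mult_distrib)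
  finally have "sqrt (ln (real n)) \<le> sqrt ((2 * w)^2)" by (rule real_sqrt_le_mono)
  moreover have "sqrt ((2 * w)^2) = 2 * w" using w0 by (subst real_sqrt_abs) simp
  ultimately have "sqrt (ln (real n)) \<le> 2 * w" by linarith
  moreover have "w \<ge> 31/10"
  proof (rule ccontr)
    assume "\<not> w \<ge> 31/10"
    then have "w ^ 4 \<le> (31/10)^4" using w0 by (intro power_mono) auto
    moreover have "sqrt (real n) \<ge> 100"
    proof -
      have "sqrt (100^2) \<le> sqrt (real n)" using n0 by (intro real_sqrt_le_mono) simp
      then show ?thesis by simp
    qed
    moreover have "(31/10::real)^4 < 100" by (simp add: power_divide)
    ultimately show False using L by simp
  qed
  moreover have "w ^ 4 \<ge> 24 * w + 13"
  proof -
    have "w ^ 3 \<ge> (31/10)^3" using \<open>w \<ge> 31/10\<close> by (intro power_mono) auto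
    then have "w * (31/10)^3 \<le> w * w ^ 3" using w0 by (intro mult_left_mono) auto
    moreover have "w * w ^ 3 = w ^ 4" by (simp add: eval_nat_numeral)
    ultimately have "w ^ 4 \<ge> w * (31/10)^3" by simp
    moreover have "(31/10::real)^3 = 29791/1000" by (simp add: power_divide)
    ultimately show ?thesis using \<open>w \<ge> 31/10\<close> by simp
  qed
  ultimately show "12 * sqrt (ln (real n)) + 13 \<le> sqrt (real n)" using L by linarith
qed

lemma NE_lemma:
  fixes m b0 :: nat and p e L :: real and W :: "nat set"
  assumes m: "m > 0" and p: "0 < p" "p < 1" "p = 1/2 + e" and e: "\<bar>e\<bar> \<le> 1/4" and L: "L \<ge> 0"
    and W: "W = {b. b \<le> m \<and> \<bar>real b - m * p\<bar> \<le> L}"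
    and b0: "b0 \<le> m" "\<bar>real b0 - m * p\<bar> \<le> L"
    and ex: "exp (-2 * L\<^sup>2 / m) \<le> 1/4"
  shows "1 / (2 * exp (2 * L * (8 * \<bar>e\<bar>))) \<le> real (\<Sum>b\<in>W. m choose b) * (p ^ b0 * (1-p) ^ (m-b0))"
proof -
  define E where "E = exp (2 * L * (8 * \<bar>e\<bar>))"
  define mu where "mu = p ^ b0 * (1-p) ^ (m-b0)"
  have E0: "E > 0" unfolding E_def by simp
  have "1/2 \<le> 1 - 2 * exp (-2 * L\<^sup>2 / m)" using ex by simp
  also have "\<dots> \<le> (\<Sum>b\<in>W. real (m choose b) * p ^ b * (1-p) ^ (m-b))"
    unfolding W using binom_window[OF m _ _ L, of p] p by simp
  also have "\<dots> \<le> (\<Sum>b\<in>W. real (m choose b) * (mu * E))"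
  proof (rule sum_mono)
    fix b assume bW: "b \<in> W"
    have "p ^ b * (1-p) ^ (m-b) \<le> mu * exp (\<bar>real b - real b0\<bar> * \<bar>ln p - ln (1-p)\<bar>)"
      unfolding mu_def using bW W b0 by (intro ratio_bound p) auto
    also have "\<dots> \<le> mu * E"
    proof -
      have "\<bar>real b - real b0\<bar> \<le> 2 * L" using bW W b0 by (auto simp: abs_le_iff)
      moreover have "\<bar>ln p - ln (1-p)\<bar> \<le> 8 * \<bar>e\<bar>" using log_ratio[OF e] p by simp
      ultimately have "\<bar>real b - real b0\<bar> * \<bar>ln p - ln (1-p)\<bar> \<le> 2 * L * (8 * \<bar>e\<bar>)"
        by (intro mult_mono) auto
      then show ?thesis unfolding E_def mu_def using p by (intro mult_left_mono) auto
    qed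
    finally show "real (m choose b) * p ^ b * (1-p) ^ (m-b) \<le> real (m choose b) * (mu * E)"
      by (simp add: mult.assoc mult_left_mono)
  qed
  also have "\<dots> = real (\<Sum>b\<in>W. m choose b) * mu * E" by (simp add: sum_distrib_right mult.assoc)
  finally have "1/2 \<le> real (\<Sum>b\<in>W. m choose b) * mu * E" .
  then show ?thesis unfolding E_def[symmetric] mu_def[symmetric] using E0 by (simp add: field_simps)
qed

theorem lemma3:
  fixes n k :: nat and i j :: int and B :: "nat set"
  assumes "n \<ge> 10^4" and "3 dvd n"
    and "\<bar>real_of_int i\<bar> \<le> sqrt (ln (real n)) / 2"
    and "\<bar>real_of_int j\<bar> \<le> sqrt (ln (real n)) / 2"
    and "B \<in> box n i j"
    and "k \<le> Kpar n"
  shows "pmf (C_pmf n i j k) B \<ge> 1 / (8 * alpha n * real (card (box n i j)))"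
proof -
  define m1 where "m1 = n div 3"
  define m2 where "m2 = n - m1"
  define K where "K = Kpar n"
  define L where "L = sqrt (real n)"
  define s where "s = sqrt (ln (real n))"
  define p where "p = p1 n i"
  define q where "q = p2 n j"
  define e1 where "e1 = 6 * real_of_int i / L"
  define e2 where "e2 = 3 * real_of_int j / L"
  define b1 where "b1 = card (B \<inter> {1..m1})"
  define b2 where "b2 = card (B \<inter> {m1+1..n})"
  define D1 where "D1 = (2 * \<bar>real_of_int i\<bar> + 1) * L + real K"
  define D2 where "D2 = (2 * \<bar>real_of_int j\<bar> + 1) * L + 2 * real K"
  have s1: "1 \<le> s" and sL: "12 * s + 13 \<le> L" using s_bound[OF assms(1)] by (simp_all add: s_def L_def)
  have L0: "L > 0" using s1 sL by linarith
  have L2: "L^2 = real n" unfolding L_def by simp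
  have ii: "\<bar>real_of_int i\<bar> \<le> s / 2" and jj: "\<bar>real_of_int j\<bar> \<le> s / 2"
    using assms(3,4) by (simp_all add: s_def)
  obtain t where t: "n = 3 * t" using assms(2) by blast
  have m1r: "real m1 = real n / 3" unfolding m1_def using t by simp
  have m2r: "real m2 = 2 * real n / 3" unfolding m2_def m1_def using t by simp
  have KL: "real K \<le> L / 12"
  proof -
    have "L / 12 \<ge> 0" using L0 by simp
    then show ?thesis unfolding K_def Kpar_def L_def by linarith
  qed
  have pe: "p = 1/2 + e1" unfolding p_def p1_def e1_def L_def by simp
  have qe: "q = 1/2 + e2" unfolding q_def p2_def e2_def L_def by simp
  have nL: "real n / L = L" using L2 L0 by (metis power2_eq_square nonzero_mult_div_cancel_left less_irrefl)
  have e1b: "\<bar>e1\<bar> \<le> 1/4"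
  proof -
    have "\<bar>e1\<bar> = 6 * \<bar>real_of_int i\<bar> / L" unfolding e1_def using L0 by (simp add: abs_mult)
    also have "\<dots> \<le> (L / 4) / L" using ii sL s1 L0 by (intro divide_right_mono) auto
    also have "\<dots> = 1/4" using L0 by simp
    finally show ?thesis .
  qed
  have e2b: "\<bar>e2\<bar> \<le> 1/4"
  proof -
    have "\<bar>e2\<bar> = 3 * \<bar>real_of_int j\<bar> / L" unfolding e2_def using L0 by (simp add: abs_mult)
    also have "\<dots> \<le> (L / 4) / L" using jj sL s1 L0 by (intro divide_right_mono) auto
    also have "\<dots> = 1/4" using L0 by simp
    finally show ?thesis .
  qed
  have p01: "0 < p" "p < 1" "0 < q" "q < 1" using pe qe e1b e2b by auto
  have Bsub: "B \<subseteq> {1..n}" and rB: "\<bar>real b1 - real n / 6 - 2 * real_of_int i * L\<bar> \<le> L"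
    and sB: "\<bar>real b2 - real n / 3 - 2 * real_of_int j * L\<bar> \<le> L"
    using assms(5) by (auto simp: box_def rD_def sD_def b1_def b2_def m1_def L_def Lpar_def algebra_simps)
  have cA1: "card {1..m1} = m1" and cA2: "card {m1+1..n} = m2" by (auto simp: m2_def)
  have b1m: "b1 \<le> m1" unfolding b1_def using card_mono[of "{1..m1}" "B \<inter> {1..m1}"] by auto
  have b2m: "b2 \<le> m2" unfolding b2_def m2_def using card_mono[of "{m1+1..n}" "B \<inter> {m1+1..n}"] by auto
  have cD1: "card ({1..m1} - B) = m1 - b1"
    unfolding b1_def by (subst card_Diff_subset_Int) (auto simp: Int_commute)
  have cD2: "card ({m1+1..n} - B) = m2 - b2"
    unfolding b2_def m2_def by (subst card_Diff_subset_Int) (auto simp: Int_commute)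
  have cr: "(real ((b1 choose k) * ((m1 - b1) choose (K-k))) / real (m1 choose K)
            * (real (fact k * fact (K-k)) / real (fact K))
            * (p ^ (b1 - k) * (1-p) ^ ((m1 - b1) - (K-k))))
       * (real ((b2 choose (2*k)) * ((m2 - b2) choose (2*K-2*k))) / real (m2 choose (2*K))
            * (real (fact (2*k) * fact (2*K-2*k)) / real (fact (2*K)))
            * (q ^ (b2 - 2*k) * (1-q) ^ ((m2 - b2) - (2*K-2*k))))
      \<le> pmf (C_pmf n i j k) B"
  proof -
    have LL: "L \<le> L^2" using sL s1 by (simp add: power2_eq_square)
    have "real K \<le> real m1" using KL LL L2 m1r by linarith
    then have "K \<le> m1" by simp
    have "real (2 * K) \<le> real m2" using KL LL L2 m2r by simp
    then have "2 * K \<le> m2" by (simp only: of_nat_le_iff)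
    have fin: "finite {1..m1}" "finite {m1+1..n}" and dj: "{1..m1} \<inter> {m1+1..n} = {}"
      and Bs: "B \<subseteq> {1..m1} \<union> {m1+1..n}" using Bsub by auto
    have kK: "k \<le> K" using assms(6) by (simp add: K_def)
    have pq: "0 \<le> p" "p \<le> 1" "0 \<le> q" "q \<le> 1" using p01 by auto
    have KA: "K \<le> card {1..m1}" "2 * K \<le> card {m1+1..n}" using \<open>K \<le> m1\<close> \<open>2 * K \<le> m2\<close> cA1 cA2 by auto
    note X = core[OF fin dj Bs kK pq KA]
    have Y: "pmf (C_pmf n i j k) B = pmf (do {
      U \<leftarrow> pmf_of_set {U. U \<subseteq> {1..m1} \<and> card U = K};
      S1 \<leftarrow> random_subset ({1..m1} - U) p;
      V \<leftarrow> pmf_of_set {V. V \<subseteq> {m1+1..n} \<and> card V = 2 * K};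
      S2 \<leftarrow> random_subset ({m1+1..n} - V) q;
      us \<leftarrow> pmf_of_set (permutations_of_set U);
      vs \<leftarrow> pmf_of_set (permutations_of_set V);
      return_pmf (set (take k us) \<union> S1 \<union> set (drop (2 * K - 2 * k) vs) \<union> S2)
    }) B" unfolding C_pmf_def m1_def K_def p_def q_def ..
    show ?thesis unfolding Y using X unfolding cA1 cA2 cD1 cD2 b1_def[symmetric] b2_def[symmetric] .
  qed
  define mu1 where "mu1 = p ^ b1 * (1-p) ^ (m1 - b1)"
  define mu2 where "mu2 = q ^ b2 * (1-q) ^ (m2 - b2)"
  define G1 where "G1 = exp (-(real (4 * K) * D1 / real m1) - real (2 * K) * \<bar>e1\<bar>)"
  define G2 where "G2 = exp (-(real (4 * (2*K)) * D2 / real m2) - real (2 * (2*K)) * \<bar>e2\<bar>)"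
  have n0: "real n > 0" using L2 L0 by (metis zero_less_power)
  have m1p: "m1 > 0" using m1r n0 by simp
  have m2p: "m2 > 0" using m2r n0 by simp
  have kKr: "real k \<le> real K" using assms(6) by (simp add: K_def)
  have iL: "\<bar>2 * real_of_int i * L\<bar> = 2 * \<bar>real_of_int i\<bar> * L" using L0 by (simp add: abs_mult)
  have jL: "\<bar>2 * real_of_int j * L\<bar> = 2 * \<bar>real_of_int j\<bar> * L" using L0 by (simp add: abs_mult)
  have D1b: "0 \<le> D1" "D1 \<le> real m1 / 4"
  proof -
    show "0 \<le> D1" unfolding D1_def using L0 by simp
    have "D1 \<le> (s + 1) * L + L / 12" unfolding D1_def using ii KL L0 by (intro add_mono mult_right_mono) auto
    also have "\<dots> = L * (s + 13/12)" by (simp add: algebra_simps)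
    also have "\<dots> \<le> L * (L / 12)" using sL L0 by (intro mult_left_mono) auto
    also have "\<dots> = real m1 / 4" using m1r L2 by (simp add: power2_eq_square)
    finally show "D1 \<le> real m1 / 4" .
  qed
  have D2b: "0 \<le> D2" "D2 \<le> real m2 / 4"
  proof -
    show "0 \<le> D2" unfolding D2_def using L0 by simp
    have "D2 \<le> (s + 1) * L + L / 6" unfolding D2_def using jj KL L0 by (intro add_mono mult_right_mono) auto
    also have "\<dots> = L * (s + 7/6)" by (simp add: algebra_simps)
    also have "\<dots> \<le> L * (L / 6)" using sL L0 s1 by (intro mult_left_mono) auto
    also have "\<dots> = real m2 / 4" using m2r L2 by (simp add: power2_eq_square)
    finally show "D2 \<le> real m2 / 4" .
  qed
  have h11: "real b1 - real k \<ge> real m1 / 2 - D1"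
    using rB iL kKr m1r unfolding D1_def abs_le_iff by (simp add: algebra_simps) linarith
  have h12: "real m1 - real b1 - (real K - real k) \<ge> real m1 / 2 - D1"
    using rB iL kKr m1r unfolding D1_def abs_le_iff by (simp add: algebra_simps) linarith
  have h21: "real b2 - real (2*k) \<ge> real m2 / 2 - D2"
    using sB jL kKr m2r unfolding D2_def abs_le_iff by (simp add: algebra_simps) linarith
  have h22: "real m2 - real b2 - (real (2*K) - real (2*k)) \<ge> real m2 / 2 - D2"
    using sB jL kKr m2r unfolding D2_def abs_le_iff by (simp add: algebra_simps) linarith
  have kK: "k \<le> K" using assms(6) by (simp add: K_def)
  have cb1: "G1 * mu1 \<le> real ((b1 choose k) * ((m1 - b1) choose (K-k))) / real (m1 choose K)
            * (real (fact k * fact (K-k)) / real (fact K))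
            * (p ^ (b1 - k) * (1-p) ^ ((m1 - b1) - (K-k)))"
    unfolding G1_def mu1_def
    by (rule comb_bound[where m=m1 and b=b1 and c=K and kk=k and p=p and e=e1 and D=D1])
       (use m1p kK D1b h11 h12 b1m pe e1b in auto)
  have cb2: "G2 * mu2 \<le> real ((b2 choose (2*k)) * ((m2 - b2) choose (2*K-2*k))) / real (m2 choose (2*K))
            * (real (fact (2*k) * fact (2*K-2*k)) / real (fact (2*K)))
            * (q ^ (b2 - 2*k) * (1-q) ^ ((m2 - b2) - (2*K-2*k)))"
    unfolding G2_def mu2_def
    by (rule comb_bound[where m=m2 and b=b2 and c="2*K" and kk="2*k" and p=q and e=e2 and D=D2])
       (use m2p kK D2b h21 h22 b2m qe e2b in auto)
  have P: "G1 * mu1 * (G2 * mu2) \<le> pmf (C_pmf n i j k) B"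
  proof -
    have "0 \<le> G1 * mu1" "0 \<le> G2 * mu2" using p01 by (auto simp: G1_def G2_def mu1_def mu2_def)
    then have "G1 * mu1 * (G2 * mu2) \<le> (real ((b1 choose k) * ((m1 - b1) choose (K-k))) / real (m1 choose K)
            * (real (fact k * fact (K-k)) / real (fact K))
            * (p ^ (b1 - k) * (1-p) ^ ((m1 - b1) - (K-k))))
       * (real ((b2 choose (2*k)) * ((m2 - b2) choose (2*K-2*k))) / real (m2 choose (2*K))
            * (real (fact (2*k) * fact (2*K-2*k)) / real (fact (2*K)))
            * (q ^ (b2 - 2*k) * (1-q) ^ ((m2 - b2) - (2*K-2*k))))"
      by (rule mult_mono[OF cb1 cb2 order_trans[OF _ cb1]])
    then show ?thesis using cr by linarith
  qed
  define W1 where "W1 = {b. b \<le> n div 3 \<and> \<bar>real b - real n / 6 - 2 * real_of_int i * Lpar n\<bar> \<le> Lpar n}"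
  define W2 where "W2 = {b. b \<le> n - n div 3 \<and> \<bar>real b - real n / 3 - 2 * real_of_int j * Lpar n\<bar> \<le> Lpar n}"
  define N1 where "N1 = real (\<Sum>b\<in>W1. n div 3 choose b)"
  define N2 where "N2 = real (\<Sum>b\<in>W2. (n - n div 3) choose b)"
  have bc: "N1 * N2 \<le> real (card (box n i j))"
    using box_count[of n i j] unfolding N1_def N2_def W1_def W2_def .
  have W1eq: "W1 = {b. b \<le> m1 \<and> \<bar>real b - real m1 * p\<bar> \<le> L}"
  proof -
    have "real m1 * p = real n / 6 + 2 * real_of_int i * (real n / L)"
      unfolding m1r pe e1_def by (simp add: algebra_simps)
    then have "real m1 * p = real n / 6 + 2 * real_of_int i * L" unfolding nL .
    then show ?thesis unfolding W1_def m1_def L_def Lpar_def by (simp add: algebra_simps)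
  qed
  have W2eq: "W2 = {b. b \<le> m2 \<and> \<bar>real b - real m2 * q\<bar> \<le> L}"
  proof -
    have "real m2 * q = real n / 3 + 2 * real_of_int j * (real n / L)"
      unfolding m2r qe e2_def by (simp add: algebra_simps)
    then have "real m2 * q = real n / 3 + 2 * real_of_int j * L" unfolding nL .
    then show ?thesis unfolding W2_def m2_def m1_def L_def Lpar_def by (simp add: algebra_simps)
  qed
  define E1 where "E1 = exp (2 * L * (8 * \<bar>e1\<bar>))"
  define E2 where "E2 = exp (2 * L * (8 * \<bar>e2\<bar>))"
  have mp1: "real m1 * p = real n / 6 + 2 * real_of_int i * L"
  proof -
    have "real m1 * p = real n / 6 + 2 * real_of_int i * (real n / L)"
      unfolding m1r pe e1_def by (simp add: algebra_simps)
    then show ?thesis unfolding nL .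
  qed
  have mp2: "real m2 * q = real n / 3 + 2 * real_of_int j * L"
  proof -
    have "real m2 * q = real n / 3 + 2 * real_of_int j * (real n / L)"
      unfolding m2r qe e2_def by (simp add: algebra_simps)
    then show ?thesis unfolding nL .
  qed
  have ex6: "exp (-2 * L\<^sup>2 / real m1) \<le> 1/4"
  proof -
    have "-2 * L\<^sup>2 / real m1 = -6" unfolding L2 m1r using n0 by (simp add: field_simps)
    moreover have "exp (-6::real) \<le> 1/4"
    proof -
      have "(7::real) \<le> exp 6" using exp_ge_add_one_self[of 6] by simp
      then show ?thesis by (simp add: exp_minus field_simps)
    qed
    ultimately show ?thesis by simp
  qed
  have ex3: "exp (-2 * L\<^sup>2 / real m2) \<le> 1/4"
  proof -
    have "-2 * L\<^sup>2 / real m2 = -3" unfolding L2 m2r using n0 by (simp add: field_simps)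
    moreover have "exp (-3::real) \<le> 1/4"
    proof -
      have "(4::real) \<le> exp 3" using exp_ge_add_one_self[of 3] by simp
      then show ?thesis by (simp add: exp_minus field_simps)
    qed
    ultimately show ?thesis by simp
  qed
  have NE1: "1 / (2 * E1) \<le> N1 * mu1"
    unfolding E1_def N1_def mu1_def m1_def[symmetric]
    by (rule NE_lemma[OF m1p p01(1,2) pe e1b less_imp_le[OF L0] W1eq b1m _ ex6]) (use rB mp1 in simp)
  have NE2: "1 / (2 * E2) \<le> N2 * mu2"
    unfolding E2_def N2_def mu2_def m1_def[symmetric] m2_def[symmetric]
    by (rule NE_lemma[OF m2p p01(3,4) qe e2b less_imp_le[OF L0] W2eq b2m _ ex3]) (use sB mp2 in simp)
  have Xb: "exp (- 120 * s) \<le> G1 * G2 / (E1 * E2)"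
  proof -
    have K12: "12 * real K \<le> L" using KL by simp
    have D1u: "D1 \<le> L * (s + 13/12)"
    proof -
      have "D1 \<le> (s + 1) * L + L / 12" unfolding D1_def using ii KL L0 by (intro add_mono mult_right_mono) auto
      then show ?thesis by (simp add: algebra_simps)
    qed
    have D2u: "D2 \<le> L * (s + 7/6)"
    proof -
      have "D2 \<le> (s + 1) * L + L / 6" unfolding D2_def using jj KL L0 by (intro add_mono mult_right_mono) auto
      then show ?thesis by (simp add: algebra_simps)
    qed
    have a1: "real (4*K) * D1 / real m1 \<le> s + 13/12"
    proof -
      have "12 * real K * D1 \<le> L * (L * (s + 13/12))"
        using K12 D1u D1b L0 by (intro mult_mono) auto
      also have "\<dots> = real n * (s + 13/12)" using L2 by (simp add: power2_eq_square)
      finally have "12 * real K * D1 \<le> real n * (s + 13/12)" .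
      then have "12 * real K * D1 / real n \<le> real n * (s + 13/12) / real n" by (rule divide_right_mono) simp
      moreover have "real (4*K) * D1 / real m1 = 12 * real K * D1 / real n" unfolding m1r using n0 by (simp add: field_simps)
      ultimately show ?thesis using n0 by simp
    qed
    have a3: "real (4*(2*K)) * D2 / real m2 \<le> s + 7/6"
    proof -
      have "12 * real K * D2 \<le> L * (L * (s + 7/6))"
        using K12 D2u D2b L0 by (intro mult_mono) auto
      also have "\<dots> = real n * (s + 7/6)" using L2 by (simp add: power2_eq_square)
      finally have "12 * real K * D2 \<le> real n * (s + 7/6)" .
      then have "12 * real K * D2 / real n \<le> real n * (s + 7/6) / real n" by (rule divide_right_mono) simp
      moreover have "real (4*(2*K)) * D2 / real m2 = 12 * real K * D2 / real n" unfolding m2r using n0 by (simp add: field_simps)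
      ultimately show ?thesis using n0 by simp
    qed
    have Le1: "L * \<bar>e1\<bar> = 6 * \<bar>real_of_int i\<bar>" unfolding e1_def using L0 by (simp add: abs_mult)
    have Le2: "L * \<bar>e2\<bar> = 3 * \<bar>real_of_int j\<bar>" unfolding e2_def using L0 by (simp add: abs_mult)
    have a2: "real (2*K) * \<bar>e1\<bar> \<le> s / 2"
    proof -
      have "real (2*K) * \<bar>e1\<bar> \<le> (L / 6) * \<bar>e1\<bar>" using KL by (intro mult_right_mono) auto
      also have "\<dots> = \<bar>real_of_int i\<bar>" using Le1 by (simp add: field_simps)
      finally show ?thesis using ii by simp
    qed
    have a4: "real (2*(2*K)) * \<bar>e2\<bar> \<le> s / 2"
    proof -
      have "real (2*(2*K)) * \<bar>e2\<bar> \<le> (L / 3) * \<bar>e2\<bar>" using KL by (intro mult_right_mono) auto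
      also have "\<dots> = \<bar>real_of_int j\<bar>" using Le2 by (simp add: field_simps)
      finally show ?thesis using jj by simp
    qed
    have a5: "2 * L * (8 * \<bar>e1\<bar>) \<le> 48 * s" using Le1 ii by (simp add: algebra_simps)
    have a6: "2 * L * (8 * \<bar>e2\<bar>) \<le> 24 * s" using Le2 jj by (simp add: algebra_simps)
    have "G1 * G2 / (E1 * E2) = exp ((-(real (4 * K) * D1 / real m1) - real (2 * K) * \<bar>e1\<bar>)
        + (-(real (4 * (2*K)) * D2 / real m2) - real (2 * (2*K)) * \<bar>e2\<bar>)
        - 2 * L * (8 * \<bar>e1\<bar>) - 2 * L * (8 * \<bar>e2\<bar>))"
      unfolding G1_def G2_def E1_def E2_def by (simp add: exp_add exp_diff)
    moreover have "- 120 * s \<le> (-(real (4 * K) * D1 / real m1) - real (2 * K) * \<bar>e1\<bar>)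
        + (-(real (4 * (2*K)) * D2 / real m2) - real (2 * (2*K)) * \<bar>e2\<bar>)
        - 2 * L * (8 * \<bar>e1\<bar>) - 2 * L * (8 * \<bar>e2\<bar>)"
      using a1 a2 a3 a4 a5 a6 s1 by linarith
    ultimately show ?thesis by simp
  qed
  have cb0: "real (card (box n i j)) > 0"
  proof -
    have "finite (box n i j)" by (rule finite_subset[of _ "Pow {1..n}"]) (auto simp: box_def)
    then show ?thesis using assms(5) by (auto simp: card_gt_0_iff)
  qed
  have "1 / (8 * alpha n) \<le> pmf (C_pmf n i j k) B * real (card (box n i j))"
  proof -
    have E0: "E1 > 0" "E2 > 0" unfolding E1_def E2_def by auto
    have "1 / (8 * alpha n) \<le> exp (- 120 * s) / 4"
      unfolding alpha_def s_def by (simp add: exp_minus field_simps)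
    also have "\<dots> \<le> G1 * G2 / (E1 * E2) / 4" using Xb by simp
    also have "\<dots> = G1 * G2 * (1 / (2 * E1)) * (1 / (2 * E2))" using E0 by (simp add: field_simps)
    also have "\<dots> \<le> G1 * G2 * (N1 * mu1) * (N2 * mu2)"
    proof -
      have "0 \<le> N1 * mu1" using NE1 E0 by (smt (verit) divide_pos_pos)
      then show ?thesis using NE1 NE2 E0 by (intro mult_mono) (auto simp: G1_def G2_def)
    qed
    also have "\<dots> = G1 * mu1 * (G2 * mu2) * (N1 * N2)" by (simp add: algebra_simps)
    also have "\<dots> \<le> pmf (C_pmf n i j k) B * real (card (box n i j))"
    proof (rule mult_mono[OF P bc])
      show "0 \<le> pmf (C_pmf n i j k) B" by simp
      show "0 \<le> N1 * N2" unfolding N1_def N2_def of_nat_mult[symmetric] by (rule of_nat_0_le_iff)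
    qed
    finally show ?thesis .
  qed
  then show ?thesis using cb0 by (simp add: field_simps alpha_def)
qed

end
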